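(* Let $p\in(0,1)$ and consider the tree $T_\infty$. Let $\gamma_U:[0,1]\to[0,\infty)$ be a continuous function such that for every fixed $a\in[0,1]$ and every vertex $v$ of $T_\infty$ at depth $m$, $\Pr\left[\sum_{e\in\pi(v)}W_e>am\right]\le\exp(-m\gamma_U(a)+o(m))$ as $m\to\infty$. Define $$\theta=\sup\left\{\frac a\rho:\gamma_U(a)+\Upsilon(\rho)=\log2,\ a\in[0,1],\ \rho\in(0,\infty)\right\}.$$ Then for every fixed $\varepsilon>0$, $\Pr[\mathrm{wh}(T_t)>\theta(1+\varepsilon)t]\to0$ as $t\to\infty$.
   Context: $\mathrm{Geo}(p)$ has $\Pr[\mathrm{Geo}(p)=k]=(1-p)^kp$, $k\ge0$. $\Upsilon(x)=x-1-\log x$ for $0<x\le1$ and $\Upsilon(x)=0$ for $x>1$. $T_\infty$ is an infinite rooted binary tree: to each vertex an independent exponential random variable with mean $1$ is attached, and $E_e$ for each of the two edges from a vertex to its children equals that vertex's variable. Weights are generated top-down: the root has weight $W=0$; for a vertex $v$ with children $v_1,v_2$, choose $i\in\{1,2\}$ uniformly and an independent $Y=1-\mathrm{Geo}(p)$, set $W_{vv_i}=\max\{Y,1-W_v\}$, $W_{v_i}=W_v+W_{vv_i}$, $W_{vv_{3-i}}=0$, $W_{v_{3-i}}=W_v$. $\pi(v)$ is the set of edges of the path from the root to $v$; the birth time is $B_v=\sum_{e\in\pi(v)}E_e$, and $T_t$ is the subtree induced by vertices with $B_v\le t$. $\mathrm{wh}(T_t)$ is the maximum of $W_v$ over vertices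 $v$ of $T_t$. *)

theory Defs
  imports "HOL-Probability.Probability" "HOL-Library.Landau_Symbols"
begin

(* Vertices of the infinite rooted binary tree T_infinity are finite lists of
   booleans; the list is the path from the vertex back to the root, i.e. the
   children of v are  True # v  and  False # v,  and [] is the root.  An edge is identified with its lower endpoint
   (the child), so the edges of the path pi(v) are the nonempty suffixes
   drop k v, k < length v. *)

type_synonym vertex = "bool list"

(* Per-vertex randomness: (exponential variable of the vertex, choice of the
   child i (True = child True # v), geometric variable Geo(p) giving Y = 1 - Geo). *)
type_synonym sample = "vertex \<Rightarrow> real \<times> bool \<times> nat"

definition vertex_dist :: "real \<Rightarrow> (real \<times> bool \<times> nat) measure" where
  "vertex_dist p = density lborel (exponential_density 1)
      \<Otimes>\<^sub>M (measure_pmf (bernoulli_pmf (1/2)) \<Otimes>\<^sub>M measure_pmf (geometric_pmf p))"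

definition tree_space :: "real \<Rightarrow> sample measure" where
  "tree_space p = (\<Pi>\<^sub>M v\<in>UNIV. vertex_dist p)"

definition Evar :: "sample \<Rightarrow> vertex \<Rightarrow> real" where
  "Evar \<omega> v = fst (\<omega> v)"
definition Choice :: "sample \<Rightarrow> vertex \<Rightarrow> bool" where
  "Choice \<omega> v = fst (snd (\<omega> v))"
definition Yvar :: "sample \<Rightarrow> vertex \<Rightarrow> real" where
  "Yvar \<omega> v = 1 - real (snd (snd (\<omega> v)))"

fun Wv :: "sample \<Rightarrow> vertex \<Rightarrow> real" where
  "Wv \<omega> [] = 0"
| "Wv \<omega> (b # v) = Wv \<omega> v +
      (if b = Choice \<omega> v then max (Yvar \<omega> v) (1 - Wv \<omega> v) else 0)"

fun We :: "sample \<Rightarrow> vertex \<Rightarrow> real" where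
  "We \<omega> [] = 0"
| "We \<omega> (b # v) = (if b = Choice \<omega> v then max (Yvar \<omega> v) (1 - Wv \<omega> v) else 0)"

(* E_e of the edge ending in u equals the variable of the parent of u *)
definition Ee :: "sample \<Rightarrow> vertex \<Rightarrow> real" where
  "Ee \<omega> u = Evar \<omega> (tl u)"

definition path_weight :: "sample \<Rightarrow> vertex \<Rightarrow> real" where
  "path_weight \<omega> v = (\<Sum>k<length v. We \<omega> (drop k v))"

definition birth :: "sample \<Rightarrow> vertex \<Rightarrow> real" where
  "birth \<omega> v = (\<Sum>k<length v. Ee \<omega> (drop k v))"

definition wh :: "sample \<Rightarrow> real \<Rightarrow> ereal" where
  "wh \<omega> t = (SUP v\<in>{v. birth \<omega> v \<le> t}. ereal (Wv \<omega> v))"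

definition Upsilon :: "real \<Rightarrow> real" where
  "Upsilon x = (if x \<le> 1 then x - 1 - ln x else 0)"

definition theta :: "(real \<Rightarrow> real) \<Rightarrow> real" where
  "theta \<gamma> = Sup {a / \<rho> | a \<rho>. \<gamma> a + Upsilon \<rho> = ln 2 \<and> a \<in> {0..1} \<and> 0 < \<rho>}"

end

theory Submission
  imports Defs
begin


lemma Wv_nonneg_ge1: "Wv \<omega> v = 0 \<or> Wv \<omega> v \<ge> 1"
proof (induction v)
  case Nil then show ?case by simp
next
  case (Cons b v)
  have Y: "Yvar \<omega> v \<le> 1" by (simp add: Yvar_def)
  from Cons show ?case by (auto simp: max_def)
qed

lemma Wv_nonneg: "Wv \<omega> v \<ge> 0"
  using Wv_nonneg_ge1[of \<omega> v] by auto

lemma Wv_le_length: "Wv \<omega> v \<le> length v"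
proof (induction v)
  case Nil then show ?case by simp
next
  case (Cons b v)
  have Y: "Yvar \<omega> v \<le> 1" by (simp add: Yvar_def)
  from Cons Y Wv_nonneg[of \<omega> v] show ?case by (auto simp: max_def)
qed

lemma path_weight_eq: "path_weight \<omega> v = Wv \<omega> v"
proof (induction v)
  case Nil then show ?case by (simp add: path_weight_def)
next
  case (Cons b v)
  have "path_weight \<omega> (b # v) = We \<omega> (b#v) + path_weight \<omega> v"
    unfolding path_weight_def by (simp add: lessThan_Suc_eq_insert_0 sum.reindex)
  then show ?case using Cons by simp
qed



lemma prob_space_vertex_dist: "prob_space (vertex_dist p)"
  unfolding vertex_dist_def
  by (intro prob_space_pair prob_space_exponential_density prob_space_measure_pmf) auto

lemma space_vertex_dist[simp]: "space (vertex_dist p) = UNIV"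
  by (simp add: vertex_dist_def space_pair_measure)

lemma pps_tree: "product_prob_space (\<lambda>_. vertex_dist p)"
  unfolding product_prob_space_def product_prob_space_axioms_def product_sigma_finite_def
  using prob_space_vertex_dist prob_space_imp_sigma_finite by blast

lemma tree_space_alt: "tree_space p = PiM UNIV (\<lambda>_. vertex_dist p)"
  by (simp add: tree_space_def)

fun Wg :: "(vertex \<Rightarrow> bool \<times> nat) \<Rightarrow> vertex \<Rightarrow> real" where
  "Wg e [] = 0"
| "Wg e (b # v) = Wg e v + (if b = fst (e v) then max (1 - real (snd (e v))) (1 - Wg e v) else 0)"

lemma Wv_Wg: "Wv \<omega> v = Wg (\<lambda>u. snd (\<omega> u)) v"
  by (induction v) (simp_all add: Choice_def Yvar_def)

definition Bf :: "(vertex \<Rightarrow> real) \<Rightarrow> vertex \<Rightarrow> real" where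
  "Bf e v = (\<Sum>k<length v. e (drop (Suc k) v))"

lemma birth_Bf: "birth \<omega> v = Bf (\<lambda>u. fst (\<omega> u)) v"
  unfolding birth_def Bf_def Ee_def Evar_def by (simp add: drop_Suc tl_drop)

lemma meas_fstsnd[measurable]:
  "(\<lambda>x::real\<times>bool\<times>nat. fst (snd x)) \<in> measurable (vertex_dist p) (count_space UNIV)"
  "(\<lambda>x::real\<times>bool\<times>nat. snd (snd x)) \<in> measurable (vertex_dist p) (count_space UNIV)"
  "(\<lambda>x::real\<times>bool\<times>nat. fst x) \<in> borel_measurable (vertex_dist p)"
  unfolding vertex_dist_def by measurable

lemma Wg_meas:
  assumes "\<forall>k<length v. drop (Suc k) v \<in> S"
  shows "(\<lambda>\<omega>. Wg (\<lambda>u. snd (\<omega> u)) v) \<in> borel_measurable (PiM S (\<lambda>_. vertex_dist p))"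
  using assms
proof (induction v)
  case Nil then show ?case by simp
next
  case (Cons b v)
  have vS: "v \<in> S" using Cons.prems by (metis drop0 drop_Suc_Cons length_Cons zero_less_Suc)
  have "\<forall>k<length v. drop (Suc k) v \<in> S"
    using Cons.prems by (metis Suc_mono drop_Suc_Cons length_Cons)
  note IH = Cons.IH[OF this]
  have c1: "(\<lambda>\<omega>. fst (snd (\<omega> v))) \<in> measurable (PiM S (\<lambda>_. vertex_dist p)) (count_space UNIV)"
    using vS by measurable
  have c2: "(\<lambda>\<omega>. snd (snd (\<omega> v))) \<in> measurable (PiM S (\<lambda>_. vertex_dist p)) (count_space UNIV)"
    using vS by measurable
  have c3: "(\<lambda>\<omega>. real (snd (snd (\<omega> v)))) \<in> borel_measurable (PiM S (\<lambda>_. vertex_dist p))"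
    using c2 by (rule measurable_compose) simp
  have c4: "Measurable.pred (PiM S (\<lambda>_. vertex_dist p)) (\<lambda>\<omega>. b = fst (snd (\<omega> v)))"
    using c1 by (rule measurable_compose) simp
  show ?case using IH c3 c4 by simp measurable
qed

lemma Bf_meas:
  assumes "\<forall>k<length v. drop (Suc k) v \<in> S"
  shows "(\<lambda>\<omega>. Bf (\<lambda>u. fst (\<omega> u)) v) \<in> borel_measurable (PiM S (\<lambda>_. vertex_dist p))"
  unfolding Bf_def
proof (rule borel_measurable_sum)
  fix k assume "k \<in> {..<length v}"
  then have "drop (Suc k) v \<in> S" using assms by auto
  then have "(\<lambda>\<omega>. \<omega> (drop (Suc k) v)) \<in> measurable (PiM S (\<lambda>_. vertex_dist p)) (vertex_dist p)"
    by measurable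
  then show "(\<lambda>\<omega>. fst (\<omega> (drop (Suc k) v))) \<in> borel_measurable (PiM S (\<lambda>_. vertex_dist p))"
    using meas_fstsnd(3) by (rule measurable_compose)
qed



lemma pair_prod_integral:
  fixes A :: "'a measure" and C :: "'b measure"
  assumes A: "prob_space A" and C: "prob_space C"
    and K1: "(\<lambda>y. K1 (fst y)) \<in> borel_measurable (A \<Otimes>\<^sub>M C)"
    and K2: "(\<lambda>y. K2 (snd y)) \<in> borel_measurable (A \<Otimes>\<^sub>M C)"
  shows "(\<integral>\<^sup>+y. K1 (fst y) * K2 (snd y) \<partial>(A \<Otimes>\<^sub>M C)) =
         (\<integral>\<^sup>+y. K1 (fst y) \<partial>(A \<Otimes>\<^sub>M C)) * (\<integral>\<^sup>+y. K2 (snd y) \<partial>(A \<Otimes>\<^sub>M C))"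
proof -
  interpret A: prob_space A by fact
  interpret C: prob_space C by fact
  interpret pair_sigma_finite A C
    by (simp add: A.sigma_finite_measure_axioms C.sigma_finite_measure_axioms pair_sigma_finite.intro)
  obtain a0 where a0: "a0 \<in> space A" using A.not_empty by blast
  obtain c0 where c0: "c0 \<in> space C" using C.not_empty by blast
  have mK1: "K1 \<in> borel_measurable A"
  proof -
    have "(\<lambda>a. K1 (fst (a, c0))) \<in> borel_measurable A"
    proof (rule measurable_compose[OF _ K1])
      show "(\<lambda>a. (a, c0)) \<in> measurable A (A \<Otimes>\<^sub>M C)" using c0 by simp
    qed
    then show ?thesis by simp
  qed
  have mK2: "K2 \<in> borel_measurable C"
  proof -
    have "(\<lambda>c. K2 (snd (a0, c))) \<in> borel_measurable C"
      by (rule measurable_compose_Pair1[OF a0]) (use K2 in simp)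
    then show ?thesis by simp
  qed
  have m12: "(\<lambda>y. K1 (fst y) * K2 (snd y)) \<in> borel_measurable (A \<Otimes>\<^sub>M C)"
    using K1 K2 by (rule borel_measurable_times_ennreal)
  have "(\<integral>\<^sup>+y. K1 (fst y) * K2 (snd y) \<partial>(A \<Otimes>\<^sub>M C)) = (\<integral>\<^sup>+a. \<integral>\<^sup>+c. K1 a * K2 c \<partial>C \<partial>A)"
    using C.nn_integral_fst[OF m12] by simp
  also have "\<dots> = (\<integral>\<^sup>+a. K1 a * (\<integral>\<^sup>+c. K2 c \<partial>C) \<partial>A)"
    by (intro nn_integral_cong nn_integral_cmult mK2)
  also have "\<dots> = (\<integral>\<^sup>+a. K1 a \<partial>A) * (\<integral>\<^sup>+c. K2 c \<partial>C)"
    by (rule nn_integral_multc[OF mK1])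
  also have "(\<integral>\<^sup>+a. K1 a \<partial>A) = (\<integral>\<^sup>+y. K1 (fst y) \<partial>(A \<Otimes>\<^sub>M C))"
  proof -
    have "(\<integral>\<^sup>+y. K1 (fst y) \<partial>(A \<Otimes>\<^sub>M C)) = (\<integral>\<^sup>+a. \<integral>\<^sup>+c. K1 a \<partial>C \<partial>A)"
      using C.nn_integral_fst[OF K1] by simp
    also have "\<dots> = (\<integral>\<^sup>+a. K1 a \<partial>A)"
      by (simp add: C.emeasure_space_1)
    finally show ?thesis by simp
  qed
  also have "(\<integral>\<^sup>+c. K2 c \<partial>C) = (\<integral>\<^sup>+y. K2 (snd y) \<partial>(A \<Otimes>\<^sub>M C))"
  proof -
    have "(\<integral>\<^sup>+y. K2 (snd y) \<partial>(A \<Otimes>\<^sub>M C)) = (\<integral>\<^sup>+a. \<integral>\<^sup>+c. K2 c \<partial>C \<partial>A)"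
      using C.nn_integral_fst[OF K2] by simp
    also have "\<dots> = (\<integral>\<^sup>+c. K2 c \<partial>C)"
      by (simp add: A.emeasure_space_1)
    finally show ?thesis by simp
  qed
  finally show ?thesis .
qed



lemma split_PiM:
  fixes A :: "'a measure" and C :: "'b measure" and S :: "'i set"
  assumes A: "prob_space A" and C: "prob_space C" and S: "finite S"
  shows "\<And>h1 h2. (\<lambda>\<omega>. h1 (\<lambda>i. fst (\<omega> i))) \<in> borel_measurable (PiM S (\<lambda>_. A \<Otimes>\<^sub>M C)) \<Longrightarrow>
     (\<lambda>\<omega>. h2 (\<lambda>i. snd (\<omega> i))) \<in> borel_measurable (PiM S (\<lambda>_. A \<Otimes>\<^sub>M C)) \<Longrightarrow>
     (\<integral>\<^sup>+\<omega>. h1 (\<lambda>i. fst (\<omega> i)) * h2 (\<lambda>i. snd (\<omega> i)) \<partial>PiM S (\<lambda>_. A \<Otimes>\<^sub>M C)) =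
     (\<integral>\<^sup>+\<omega>. h1 (\<lambda>i. fst (\<omega> i)) \<partial>PiM S (\<lambda>_. A \<Otimes>\<^sub>M C)) *
     (\<integral>\<^sup>+\<omega>. h2 (\<lambda>i. snd (\<omega> i)) \<partial>PiM S (\<lambda>_. A \<Otimes>\<^sub>M C))"
  using S
proof (induction S rule: finite_induct)
  case empty
  then show ?case by (simp add: PiM_empty nn_integral_count_space_finite)
next
  case (insert i S h1 h2)
  let ?N = "A \<Otimes>\<^sub>M C"
  interpret A: prob_space A by fact
  interpret C: prob_space C by fact
  interpret N: prob_space ?N by (intro prob_space_pair A C)
  interpret ps: product_sigma_finite "\<lambda>_. ?N"
    by (simp add: N.sigma_finite_measure_axioms product_sigma_finite_def)
  interpret pS: finite_product_sigma_finite "\<lambda>_. ?N" S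
    by standard (use insert in auto)
  interpret pair_sigma_finite "?N" "PiM S (\<lambda>_. ?N)"
    by (simp add: N.sigma_finite_measure_axioms pS.sigma_finite_measure_axioms pair_sigma_finite.intro)
  note m1 = insert.prems(1) and m2 = insert.prems(2)
  have upd1: "(\<lambda>j. fst ((x(i := y)) j)) = (\<lambda>j. fst (x j))(i := fst y)" for x :: "'i \<Rightarrow> 'a \<times> 'b" and y
    by auto
  have upd2: "(\<lambda>j. snd ((x(i := y)) j)) = (\<lambda>j. snd (x j))(i := snd y)" for x :: "'i \<Rightarrow> 'a \<times> 'b" and y
    by auto
  have mu: "(\<lambda>(y, x). x(i := y)) \<in> measurable (?N \<Otimes>\<^sub>M PiM S (\<lambda>_. ?N)) (PiM (insert i S) (\<lambda>_. ?N))"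
  proof -
    have "(\<lambda>(x, y). x(i := y)) \<in> measurable (PiM S (\<lambda>_. ?N) \<Otimes>\<^sub>M ?N) (PiM (insert i S) (\<lambda>_. ?N))"
      by (rule measurable_add_dim)
    from measurable_compose[OF measurable_pair_swap' this] show ?thesis
      by (simp add: case_prod_beta')
  qed
  have J1: "(\<lambda>(y, x). h1 ((\<lambda>j. fst (x j))(i := fst y))) \<in> borel_measurable (?N \<Otimes>\<^sub>M PiM S (\<lambda>_. ?N))"
    using measurable_compose[OF mu m1] by (simp add: case_prod_beta' fun_upd_def if_distrib)
  have J2: "(\<lambda>(y, x). h2 ((\<lambda>j. snd (x j))(i := snd y))) \<in> borel_measurable (?N \<Otimes>\<^sub>M PiM S (\<lambda>_. ?N))"
    using measurable_compose[OF mu m2] by (simp add: case_prod_beta' fun_upd_def if_distrib)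
  have J1y: "(\<lambda>x. h1 ((\<lambda>j. fst (x j))(i := fst y))) \<in> borel_measurable (PiM S (\<lambda>_. ?N))"
    if "y \<in> space ?N" for y
    using measurable_compose_Pair1[OF that J1] by simp
  have J2y: "(\<lambda>x. h2 ((\<lambda>j. snd (x j))(i := snd y))) \<in> borel_measurable (PiM S (\<lambda>_. ?N))"
    if "y \<in> space ?N" for y
    using measurable_compose_Pair1[OF that J2] by simp
  define K1 where "K1 a = (\<integral>\<^sup>+x. h1 ((\<lambda>j. fst (x j))(i := a)) \<partial>PiM S (\<lambda>_. ?N))" for a
  define K2 where "K2 c = (\<integral>\<^sup>+x. h2 ((\<lambda>j. snd (x j))(i := c)) \<partial>PiM S (\<lambda>_. ?N))" for c
  have mK1: "(\<lambda>y. K1 (fst y)) \<in> borel_measurable ?N"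
    unfolding K1_def using pS.borel_measurable_nn_integral_fst[OF J1] by (simp add: case_prod_beta')
  have mK2: "(\<lambda>y. K2 (snd y)) \<in> borel_measurable ?N"
    unfolding K2_def using pS.borel_measurable_nn_integral_fst[OF J2] by (simp add: case_prod_beta')
  have mprod: "(\<lambda>\<omega>. h1 (\<lambda>i. fst (\<omega> i)) * h2 (\<lambda>i. snd (\<omega> i))) \<in> borel_measurable (PiM (insert i S) (\<lambda>_. ?N))"
    using m1 m2 by (rule borel_measurable_times_ennreal)
  have "(\<integral>\<^sup>+\<omega>. h1 (\<lambda>i. fst (\<omega> i)) * h2 (\<lambda>i. snd (\<omega> i)) \<partial>PiM (insert i S) (\<lambda>_. ?N))
      = (\<integral>\<^sup>+y. \<integral>\<^sup>+x. h1 ((\<lambda>j. fst (x j))(i := fst y)) * h2 ((\<lambda>j. snd (x j))(i := snd y)) \<partial>PiM S (\<lambda>_. ?N) \<partial>?N)"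
    by (subst ps.product_nn_integral_insert_rev[OF insert(1,2) mprod]) (simp add: fun_upd_def if_distrib)
  also have "\<dots> = (\<integral>\<^sup>+y. K1 (fst y) * K2 (snd y) \<partial>?N)"
  proof (rule nn_integral_cong)
    fix y assume y: "y \<in> space ?N"
    have e1: "(\<lambda>x. h1 ((\<lambda>j. fst (x j))(i := fst y))) = (\<lambda>x. (\<lambda>e. h1 (e(i := fst y))) (\<lambda>j. fst (x j)))" by simp
    have e2: "(\<lambda>x. h2 ((\<lambda>j. snd (x j))(i := snd y))) = (\<lambda>x. (\<lambda>e. h2 (e(i := snd y))) (\<lambda>j. snd (x j)))" by simp
    show "(\<integral>\<^sup>+x. h1 ((\<lambda>j. fst (x j))(i := fst y)) * h2 ((\<lambda>j. snd (x j))(i := snd y)) \<partial>PiM S (\<lambda>_. ?N)) = K1 (fst y) * K2 (snd y)"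
      unfolding K1_def K2_def
      using insert.IH[of "\<lambda>e. h1 (e(i := fst y))" "\<lambda>e. h2 (e(i := snd y))"] J1y[OF y] J2y[OF y]
      by simp
  qed
  also have "\<dots> = (\<integral>\<^sup>+y. K1 (fst y) \<partial>?N) * (\<integral>\<^sup>+y. K2 (snd y) \<partial>?N)"
    using pair_prod_integral[OF A C mK1 mK2] .
  also have "(\<integral>\<^sup>+y. K1 (fst y) \<partial>?N) = (\<integral>\<^sup>+\<omega>. h1 (\<lambda>i. fst (\<omega> i)) \<partial>PiM (insert i S) (\<lambda>_. ?N))"
    unfolding K1_def by (subst ps.product_nn_integral_insert_rev[OF insert(1,2) m1]) (simp add: fun_upd_def if_distrib)
  also have "(\<integral>\<^sup>+y. K2 (snd y) \<partial>?N) = (\<integral>\<^sup>+\<omega>. h2 (\<lambda>i. snd (\<omega> i)) \<partial>PiM (insert i S) (\<lambda>_. ?N))"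
    unfolding K2_def by (subst ps.product_nn_integral_insert_rev[OF insert(1,2) m2]) (simp add: fun_upd_def if_distrib)
  finally show ?case .
qed



definition anc :: "vertex \<Rightarrow> vertex set" where
  "anc v = (\<lambda>k. drop (Suc k) v) ` {..<length v}"

lemma finite_anc[simp]: "finite (anc v)" by (simp add: anc_def)
lemma in_anc: "\<forall>k<length v. drop (Suc k) v \<in> anc v" by (simp add: anc_def)

lemma Wg_cong: "(\<forall>k<length v. e (drop (Suc k) v) = e' (drop (Suc k) v)) \<Longrightarrow> Wg e v = Wg e' v"
proof (induction v)
  case Nil then show ?case by simp
next
  case (Cons b v)
  have "e v = e' v" using Cons.prems by (metis drop0 drop_Suc_Cons length_Cons zero_less_Suc)
  moreover have "\<forall>k<length v. e (drop (Suc k) v) = e' (drop (Suc k) v)"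
    using Cons.prems by (metis Suc_mono drop_Suc_Cons length_Cons)
  ultimately show ?case using Cons.IH by simp
qed

lemma Wg_restrict: "Wg (\<lambda>u. snd (restrict \<omega> (anc v) u)) v = Wg (\<lambda>u. snd (\<omega> u)) v"
  by (rule Wg_cong) (simp add: anc_def)

lemma Bf_restrict: "Bf (\<lambda>u. fst (restrict \<omega> (anc v) u)) v = Bf (\<lambda>u. fst (\<omega> u)) v"
  unfolding Bf_def by (intro sum.cong) (auto simp: anc_def)

lemma transfer_int:
  fixes f :: "sample \<Rightarrow> ennreal"
  assumes S: "finite S" and fm: "f \<in> borel_measurable (PiM S (\<lambda>_. vertex_dist p))"
    and inv: "\<And>\<omega>. f (restrict \<omega> S) = f \<omega>"
  shows "(\<integral>\<^sup>+\<omega>. f \<omega> \<partial>tree_space p) = (\<integral>\<^sup>+\<omega>. f \<omega> \<partial>PiM S (\<lambda>_. vertex_dist p))"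
proof -
  interpret product_prob_space "\<lambda>_. vertex_dist p" UNIV by (rule pps_tree)
  have "(\<integral>\<^sup>+\<omega>. f \<omega> \<partial>PiM S (\<lambda>_. vertex_dist p)) =
        (\<integral>\<^sup>+\<omega>. f \<omega> \<partial>distr (PiM UNIV (\<lambda>_. vertex_dist p)) (PiM S (\<lambda>_. vertex_dist p)) (\<lambda>x. restrict x S))"
    using distr_PiM_restrict_finite[OF S] by simp
  also have "\<dots> = (\<integral>\<^sup>+\<omega>. f (restrict \<omega> S) \<partial>PiM UNIV (\<lambda>_. vertex_dist p))"
    by (rule nn_integral_distr) (simp_all add: fm measurable_restrict_subset)
  finally show ?thesis by (simp add: inv tree_space_def)
qed

lemma meas_T_birth: "(\<lambda>\<omega>. birth \<omega> v) \<in> borel_measurable (tree_space p)"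
  unfolding birth_Bf tree_space_def by (rule Bf_meas) simp
lemma meas_T_Wv: "(\<lambda>\<omega>. Wv \<omega> v) \<in> borel_measurable (tree_space p)"
  unfolding Wv_Wg tree_space_def by (rule Wg_meas) simp

lemma factor:
  "emeasure (tree_space p) {\<omega>\<in>space (tree_space p). birth \<omega> v \<le> t \<and> Wv \<omega> v > x} =
   emeasure (tree_space p) {\<omega>\<in>space (tree_space p). birth \<omega> v \<le> t} *
   emeasure (tree_space p) {\<omega>\<in>space (tree_space p). Wv \<omega> v > x}"
proof -
  let ?S = "anc v"
  let ?P = "PiM ?S (\<lambda>_. vertex_dist p)"
  define h1 where "h1 e = (if Bf e v \<le> t then 1 else 0 :: ennreal)" for e
  define h2 where "h2 e = (if Wg e v > x then 1 else 0 :: ennreal)" for e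
  have mB: "(\<lambda>\<omega>. Bf (\<lambda>u. fst (\<omega> u)) v) \<in> borel_measurable ?P"
    by (rule Bf_meas) (rule in_anc)
  have mW: "(\<lambda>\<omega>. Wg (\<lambda>u. snd (\<omega> u)) v) \<in> borel_measurable ?P"
    by (rule Wg_meas) (rule in_anc)
  have m1: "(\<lambda>\<omega>. h1 (\<lambda>i. fst (\<omega> i))) \<in> borel_measurable ?P"
    unfolding h1_def using mB by measurable
  have m2: "(\<lambda>\<omega>. h2 (\<lambda>i. snd (\<omega> i))) \<in> borel_measurable ?P"
    unfolding h2_def using mW by measurable
  have sets1: "{\<omega>\<in>space (tree_space p). birth \<omega> v \<le> t} \<in> sets (tree_space p)"
    using meas_T_birth by measurable
  have sets2: "{\<omega>\<in>space (tree_space p). Wv \<omega> v > x} \<in> sets (tree_space p)"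
    using meas_T_Wv by measurable
  have sets12: "{\<omega>\<in>space (tree_space p). birth \<omega> v \<le> t \<and> Wv \<omega> v > x} \<in> sets (tree_space p)"
    using meas_T_Wv meas_T_birth by measurable
  have vd: "vertex_dist p = density lborel (exponential_density 1) \<Otimes>\<^sub>M (measure_pmf (bernoulli_pmf (1/2)) \<Otimes>\<^sub>M measure_pmf (geometric_pmf p))"
    by (simp add: vertex_dist_def)
  have split: "(\<integral>\<^sup>+\<omega>. h1 (\<lambda>i. fst (\<omega> i)) * h2 (\<lambda>i. snd (\<omega> i)) \<partial>?P) =
     (\<integral>\<^sup>+\<omega>. h1 (\<lambda>i. fst (\<omega> i)) \<partial>?P) * (\<integral>\<^sup>+\<omega>. h2 (\<lambda>i. snd (\<omega> i)) \<partial>?P)"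
    using m1 m2 unfolding vd
    by (intro split_PiM prob_space_exponential_density prob_space_pair prob_space_measure_pmf) auto
  have e12: "emeasure (tree_space p) {\<omega>\<in>space (tree_space p). birth \<omega> v \<le> t \<and> Wv \<omega> v > x}
     = (\<integral>\<^sup>+\<omega>. h1 (\<lambda>i. fst (\<omega> i)) * h2 (\<lambda>i. snd (\<omega> i)) \<partial>tree_space p)"
    unfolding nn_integral_indicator[OF sets12, symmetric]
    by (auto intro!: nn_integral_cong simp: h1_def h2_def birth_Bf Wv_Wg indicator_def)
  have e1: "emeasure (tree_space p) {\<omega>\<in>space (tree_space p). birth \<omega> v \<le> t}
     = (\<integral>\<^sup>+\<omega>. h1 (\<lambda>i. fst (\<omega> i)) \<partial>tree_space p)"
    unfolding nn_integral_indicator[OF sets1, symmetric]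
    by (auto intro!: nn_integral_cong simp: h1_def birth_Bf indicator_def)
  have e2: "emeasure (tree_space p) {\<omega>\<in>space (tree_space p). Wv \<omega> v > x}
     = (\<integral>\<^sup>+\<omega>. h2 (\<lambda>i. snd (\<omega> i)) \<partial>tree_space p)"
    unfolding nn_integral_indicator[OF sets2, symmetric]
    by (auto intro!: nn_integral_cong simp: h2_def Wv_Wg indicator_def)
  have t12: "(\<integral>\<^sup>+\<omega>. h1 (\<lambda>i. fst (\<omega> i)) * h2 (\<lambda>i. snd (\<omega> i)) \<partial>tree_space p) =
      (\<integral>\<^sup>+\<omega>. h1 (\<lambda>i. fst (\<omega> i)) * h2 (\<lambda>i. snd (\<omega> i)) \<partial>?P)"
    by (rule transfer_int) (simp, rule borel_measurable_times_ennreal[OF m1 m2], simp only: h1_def h2_def Bf_restrict Wg_restrict)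
  have t1: "(\<integral>\<^sup>+\<omega>. h1 (\<lambda>i. fst (\<omega> i)) \<partial>tree_space p) = (\<integral>\<^sup>+\<omega>. h1 (\<lambda>i. fst (\<omega> i)) \<partial>?P)"
    by (rule transfer_int) (simp, rule m1, simp only: h1_def Bf_restrict)
  have t2: "(\<integral>\<^sup>+\<omega>. h2 (\<lambda>i. snd (\<omega> i)) \<partial>tree_space p) = (\<integral>\<^sup>+\<omega>. h2 (\<lambda>i. snd (\<omega> i)) \<partial>?P)"
    by (rule transfer_int) (simp, rule m2, simp only: h2_def Wg_restrict)
  show ?thesis using e12 e1 e2 t12 t1 t2 split by simp
qed



lemma int_exp_density: "0 < l \<Longrightarrow> (\<integral>\<^sup>+x. ennreal (exponential_density l x) \<partial>lborel) = 1"
proof -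
  assume l: "0 < l"
  interpret prob_space "density lborel (exponential_density l)"
    using prob_space_exponential_density[OF l] .
  have "1 = emeasure (density lborel (exponential_density l)) (space (density lborel (exponential_density l)))"
    using emeasure_space_1 by simp
  also have "\<dots> = (\<integral>\<^sup>+x. ennreal (exponential_density l x) \<partial>lborel)"
    by (subst emeasure_density) (auto intro!: nn_integral_cong)
  finally show ?thesis by simp
qed

lemma laplace_exp1:
  assumes lam: "0 \<le> lam"
  shows "(\<integral>\<^sup>+a. ennreal (exp (- lam * a)) \<partial>density lborel (exponential_density 1)) = ennreal (1 / (1 + lam))"
proof -
  have "(\<integral>\<^sup>+a. ennreal (exp (- lam * a)) \<partial>density lborel (exponential_density 1))
     = (\<integral>\<^sup>+a. ennreal (exponential_density 1 a) * ennreal (exp (- lam * a)) \<partial>lborel)"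
    by (rule nn_integral_density) auto
  also have "\<dots> = (\<integral>\<^sup>+a. ennreal (exponential_density (1 + lam) a) * ennreal (1 / (1 + lam)) \<partial>lborel)"
  proof (rule nn_integral_cong)
    fix a :: real
    have "exponential_density 1 a * exp (- lam * a) = exponential_density (1 + lam) a * (1 / (1 + lam))"
      using lam by (auto simp: exponential_density_def field_simps exp_add[symmetric])
    then show "ennreal (exponential_density 1 a) * ennreal (exp (- lam * a)) =
        ennreal (exponential_density (1 + lam) a) * ennreal (1 / (1 + lam))"
      using lam by (simp add: ennreal_mult'[symmetric] exponential_density_nonneg)
  qed
  also have "\<dots> = (\<integral>\<^sup>+a. ennreal (exponential_density (1 + lam) a) \<partial>lborel) * ennreal (1 / (1 + lam))"
    by (rule nn_integral_multc) auto
  also have "\<dots> = ennreal (1 / (1 + lam))"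
    using lam by (simp add: int_exp_density)
  finally show ?thesis .
qed

lemma laplace_vd:
  assumes lam: "0 \<le> lam"
  shows "(\<integral>\<^sup>+y. ennreal (exp (- lam * fst y)) \<partial>vertex_dist p) = ennreal (1 / (1 + lam))"
proof -
  let ?A = "density lborel (exponential_density 1)"
  let ?C = "measure_pmf (bernoulli_pmf (1/2)) \<Otimes>\<^sub>M measure_pmf (geometric_pmf p)"
  interpret C: prob_space ?C by (intro prob_space_pair prob_space_measure_pmf)
  have m: "(\<lambda>y. ennreal (exp (- lam * fst y))) \<in> borel_measurable (?A \<Otimes>\<^sub>M ?C)" by measurable
  have "(\<integral>\<^sup>+y. ennreal (exp (- lam * fst y)) \<partial>(?A \<Otimes>\<^sub>M ?C)) = (\<integral>\<^sup>+a. \<integral>\<^sup>+c. ennreal (exp (- lam * a)) \<partial>?C \<partial>?A)"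
    using C.nn_integral_fst[OF m] by simp
  also have "\<dots> = (\<integral>\<^sup>+a. ennreal (exp (- lam * a)) \<partial>?A)"
    by (simp add: C.emeasure_space_1)
  finally show ?thesis using laplace_exp1[OF lam] by (simp add: vertex_dist_def)
qed

lemma card_anc: "card (anc v) = length v"
proof -
  have "inj_on (\<lambda>k. drop (Suc k) v) {..<length v}"
    unfolding inj_on_def by (metis lessThan_iff length_drop diff_Suc_Suc diff_diff_cancel Suc_le_eq less_imp_le_nat)
  then show ?thesis unfolding anc_def by (simp add: card_image)
qed

lemma chernoff_birth:
  assumes lam: "0 \<le> lam"
  shows "emeasure (tree_space p) {\<omega>\<in>space (tree_space p). birth \<omega> v \<le> t}
     \<le> ennreal (exp (lam * t) * (1 / (1 + lam)) ^ length v)"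
proof -
  let ?S = "anc v"
  let ?P = "PiM ?S (\<lambda>_. vertex_dist p)"
  have inj: "inj_on (\<lambda>k. drop (Suc k) v) {..<length v}"
    unfolding inj_on_def by (metis lessThan_iff length_drop diff_Suc_Suc diff_diff_cancel Suc_le_eq less_imp_le_nat)
  have bsum: "birth \<omega> v = (\<Sum>u\<in>?S. fst (\<omega> u))" for \<omega>
    unfolding birth_Bf Bf_def anc_def by (simp add: sum.reindex[OF inj])
  define f where "f \<omega> = (\<Prod>u\<in>?S. ennreal (exp (- lam * fst (\<omega> u))))" for \<omega> :: sample
  have f_eq: "f \<omega> = ennreal (exp (- lam * birth \<omega> v))" for \<omega>
    unfolding f_def bsum
    by (simp add: prod_ennreal exp_sum[symmetric] sum_distrib_left sum_negf)
  have sets1: "{\<omega>\<in>space (tree_space p). birth \<omega> v \<le> t} \<in> sets (tree_space p)"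
    using meas_T_birth by measurable
  have "emeasure (tree_space p) {\<omega>\<in>space (tree_space p). birth \<omega> v \<le> t}
     = (\<integral>\<^sup>+\<omega>. indicator {\<omega>\<in>space (tree_space p). birth \<omega> v \<le> t} \<omega> \<partial>tree_space p)"
    by (rule nn_integral_indicator[OF sets1, symmetric])
  also have "\<dots> \<le> (\<integral>\<^sup>+\<omega>. ennreal (exp (lam * t)) * f \<omega> \<partial>tree_space p)"
  proof (rule nn_integral_mono)
    fix \<omega> assume "\<omega> \<in> space (tree_space p)"
    show "indicator {\<omega>\<in>space (tree_space p). birth \<omega> v \<le> t} \<omega> \<le> ennreal (exp (lam * t)) * f \<omega>"
    proof (cases "birth \<omega> v \<le> t")
      case True
      have "1 \<le> exp (lam * t) * exp (- lam * birth \<omega> v)"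
        using True lam by (simp add: exp_add[symmetric] mult_left_mono algebra_simps)
      then have "ennreal 1 \<le> ennreal (exp (lam * t) * exp (- lam * birth \<omega> v))"
        by (rule ennreal_leI)
      then show ?thesis by (simp add: f_eq ennreal_mult' indicator_def)
    qed (simp add: indicator_def)
  qed
  also have "\<dots> = ennreal (exp (lam * t)) * (\<integral>\<^sup>+\<omega>. f \<omega> \<partial>tree_space p)"
    by (rule nn_integral_cmult) (unfold f_eq, use meas_T_birth[of v p] in measurable)
  also have "(\<integral>\<^sup>+\<omega>. f \<omega> \<partial>tree_space p) = (\<integral>\<^sup>+\<omega>. f \<omega> \<partial>?P)"
    by (rule transfer_int) (auto simp: f_def intro!: prod.cong)
  also have "\<dots> = (\<Prod>u\<in>?S. (\<integral>\<^sup>+y. ennreal (exp (- lam * fst y)) \<partial>vertex_dist p))"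
  proof -
    interpret product_sigma_finite "\<lambda>_. vertex_dist p"
      by (simp add: product_sigma_finite_def prob_space_imp_sigma_finite prob_space_vertex_dist)
    show ?thesis unfolding f_def
      by (rule product_nn_integral_prod) auto
  qed
  also have "\<dots> = ennreal (1 / (1 + lam)) ^ length v"
    using laplace_vd[OF lam, of p] by (simp add: card_anc)
  finally show ?thesis
    using lam by (simp add: ennreal_mult' ennreal_power)
qed



lemma Ups_alt: "0 < x \<Longrightarrow> Upsilon x = min x 1 - 1 - ln (min x 1)"
  by (simp add: Upsilon_def min_def)

lemma Ups_nonneg: "0 < x \<Longrightarrow> Upsilon x \<ge> 0"
  using ln_le_minus_one[of x] by (simp add: Upsilon_def)

lemma Ups_big: "0 < x \<Longrightarrow> x \<le> exp (-3) \<Longrightarrow> Upsilon x \<ge> 2"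
proof -
  assume x: "0 < x" "x \<le> exp (-3)"
  then have "ln x \<le> -3" by (metis ln_exp ln_le_cancel_iff exp_gt_zero)
  moreover have "x \<le> 1" using x(2) by (smt (verit) exp_le_one_iff)
  ultimately show ?thesis using x by (simp add: Upsilon_def)
qed

lemma Ups_cont: "0 < r0 \<Longrightarrow> continuous_on {r0..b} Upsilon"
proof -
  assume r0: "0 < r0"
  have "continuous_on {r0..b} (\<lambda>x. min x 1 - 1 - ln (min x 1))"
    using r0 by (intro continuous_intros) auto
  then show ?thesis
    by (rule continuous_on_cong[THEN iffD1, rotated 2]) (use r0 in \<open>auto simp: Ups_alt\<close>)
qed

lemma exp3_pos: "0 < exp (-3::real)" by simp

lemma ln2_lt2: "ln (2::real) < 2" using ln_2_less_1 by simp

definition ThetaSet :: "(real \<Rightarrow> real) \<Rightarrow> real set" where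
  "ThetaSet \<gamma> = {a / \<rho> | a \<rho>. \<gamma> a + Upsilon \<rho> = ln 2 \<and> a \<in> {0..1} \<and> 0 < \<rho>}"

lemma theta_ThetaSet: "theta \<gamma> = Sup (ThetaSet \<gamma>)"
  by (simp add: theta_def ThetaSet_def)

lemma bdd_ThetaSet:
  assumes nonneg: "\<forall>a\<in>{0..1}. \<gamma> a \<ge> 0"
  shows "bdd_above (ThetaSet \<gamma>)"
proof (rule bdd_aboveI)
  fix x assume "x \<in> ThetaSet \<gamma>"
  then obtain a \<rho> where x: "x = a / \<rho>" "\<gamma> a + Upsilon \<rho> = ln 2" "a \<in> {0..1}" "0 < \<rho>"
    by (auto simp: ThetaSet_def)
  have "\<rho> > exp (-3)"
  proof (rule ccontr)
    assume "\<not> ?thesis"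
    then have "Upsilon \<rho> \<ge> 2" using Ups_big x(4) by simp
    moreover have "\<gamma> a \<ge> 0" using nonneg x(3) by blast
    ultimately show False using x(2) ln2_lt2 by linarith
  qed
  then have "a / \<rho> \<le> 1 / exp (-3)"
    using x(3,4) by (intro frac_le) auto
  then show "x \<le> 1 / exp (-3)" using x(1) by simp
qed

lemma IVT_Ups:
  assumes y: "0 \<le> y" "y \<le> ln 2" and r: "exp (-3) \<le> r" "Upsilon r \<le> y"
  shows "\<exists>\<rho>. exp (-3) \<le> \<rho> \<and> \<rho> \<le> r \<and> Upsilon \<rho> = y"
proof -
  have "Upsilon (exp (-3)) \<ge> 2" by (rule Ups_big) auto
  then have "y \<le> Upsilon (exp (-3))" using y ln2_lt2 by linarith
  from IVT2'[of Upsilon r y "exp (-3)", OF r(2) this r(1) Ups_cont[OF exp3_pos]] show ?thesis by blast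
qed

lemma theta_pos:
  assumes cont: "continuous_on {0..1} \<gamma>" and nonneg: "\<forall>a\<in>{0..1}. \<gamma> a \<ge> 0"
    and g0: "\<gamma> 0 < ln 2"
  shows "theta \<gamma> > 0"
proof -
  have "0 \<in> {0..1::real}" by simp
  from cont[unfolded continuous_on_iff, rule_format, OF this, of "ln 2 - \<gamma> 0"] g0
  obtain d where d: "d > 0" "\<And>x. x \<in> {0..1} \<Longrightarrow> dist x 0 < d \<Longrightarrow> dist (\<gamma> x) (\<gamma> 0) < ln 2 - \<gamma> 0"
    by auto
  define a where "a = min (d/2) 1"
  have a: "0 < a" "a \<in> {0..1}" "dist a 0 < d" using d(1) by (auto simp: a_def)
  have ga: "\<gamma> a < ln 2" using d(2)[OF a(2,3)] by (simp add: dist_real_def abs_less_iff)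
  have ga0: "\<gamma> a \<ge> 0" using nonneg a(2) by blast
  have "Upsilon 1 = 0" by (simp add: Upsilon_def)
  then obtain \<rho> where r: "exp (-3) \<le> \<rho>" "\<rho> \<le> 1" "Upsilon \<rho> = ln 2 - \<gamma> a"
    using IVT_Ups[of "ln 2 - \<gamma> a" 1] ga ga0 by auto
  have rpos: "0 < \<rho>" using r(1) exp3_pos by linarith
  have mem: "a / \<rho> \<in> ThetaSet \<gamma>"
    unfolding ThetaSet_def using r(3) a(2) rpos by force
  have "a / \<rho> \<le> theta \<gamma>"
    unfolding theta_ThetaSet by (rule cSup_upper[OF mem bdd_ThetaSet[OF nonneg]])
  moreover have "a / \<rho> > 0" using a(1) rpos by simp
  ultimately show ?thesis by linarith
qed

lemma theta_strict:
  assumes nonneg: "\<forall>a\<in>{0..1}. \<gamma> a \<ge> 0"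
    and c: "c > theta \<gamma>" and cpos: "c > 0" and rho: "0 < \<rho>" "c * \<rho> \<le> 1"
  shows "\<gamma> (c * \<rho>) + Upsilon \<rho> > ln 2"
proof (rule ccontr)
  assume "\<not> ?thesis"
  then have le: "\<gamma> (c * \<rho>) + Upsilon \<rho> \<le> ln 2" by simp
  define a where "a = c * \<rho>"
  have a: "0 < a" "a \<in> {0..1}" using cpos rho by (auto simp: a_def)
  have ga0: "\<gamma> a \<ge> 0" using nonneg a(2) by blast
  define r where "r = min \<rho> 1"
  have Ur: "Upsilon r = Upsilon \<rho>" by (simp add: r_def Upsilon_def min_def)
  have rpos: "0 < r" using rho by (simp add: r_def)
  have r3: "exp (-3) \<le> r"
  proof (rule ccontr)
    assume "\<not> ?thesis"
    then have "Upsilon r \<ge> 2" using Ups_big rpos by simp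
    then show False using le Ur ga0 ln2_lt2 by (simp add: a_def)
  qed
  obtain \<rho>' where r': "exp (-3) \<le> \<rho>'" "\<rho>' \<le> r" "Upsilon \<rho>' = ln 2 - \<gamma> a"
    using IVT_Ups[of "ln 2 - \<gamma> a" r] r3 le Ur ga0 Ups_nonneg[OF rho(1)] by (auto simp: a_def)
  have r'pos: "0 < \<rho>'" using r'(1) exp3_pos by linarith
  have mem: "a / \<rho>' \<in> ThetaSet \<gamma>"
    unfolding ThetaSet_def using r'(3) a(2) r'pos by force
  have "a / \<rho>' \<le> theta \<gamma>"
    unfolding theta_ThetaSet by (rule cSup_upper[OF mem bdd_ThetaSet[OF nonneg]])
  moreover have "a / \<rho> \<le> a / \<rho>'"
    using r'(2) r'pos a(1) by (intro divide_left_mono) (auto simp: r_def)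
  moreover have "a / \<rho> = c" using rho by (simp add: a_def)
  ultimately show False using c by linarith
qed

lemma theta_gap:
  assumes cont: "continuous_on {0..1} \<gamma>" and nonneg: "\<forall>a\<in>{0..1}. \<gamma> a \<ge> 0"
    and c: "c > theta \<gamma>" and cpos: "c > 0"
  shows "\<exists>\<delta>>0. \<forall>\<rho>. 0 < \<rho> \<longrightarrow> c * \<rho> \<le> 1 \<longrightarrow> \<gamma> (c * \<rho>) + Upsilon \<rho> \<ge> ln 2 + \<delta>"
proof (cases "1 / c < exp (-3)")
  case True
  show ?thesis
  proof (intro exI[of _ "2 - ln 2"] conjI allI impI)
    show "0 < 2 - ln (2::real)" using ln2_lt2 by simp
    fix \<rho> :: real assume r: "0 < \<rho>" "c * \<rho> \<le> 1"
    then have "\<rho> \<le> 1 / c" using cpos by (simp add: field_simps)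
    then have "Upsilon \<rho> \<ge> 2" using True r by (intro Ups_big) auto
    moreover have "\<gamma> (c * \<rho>) \<ge> 0" using nonneg r cpos by simp
    ultimately show "\<gamma> (c * \<rho>) + Upsilon \<rho> \<ge> ln 2 + (2 - ln 2)" by simp
  qed
next
  case False
  let ?K = "{exp (-3) .. 1 / c}"
  let ?\<phi> = "\<lambda>\<rho>. \<gamma> (c * \<rho>) + Upsilon \<rho>"
  have contK: "continuous_on ?K ?\<phi>"
  proof (intro continuous_on_add)
    show "continuous_on ?K (\<lambda>\<rho>. \<gamma> (c * \<rho>))"
    proof (rule continuous_on_compose2[OF cont])
      show "continuous_on ?K ((*) c)" by (intro continuous_intros)
      show "(*) c ` ?K \<subseteq> {0..1}"
        using cpos by (auto simp: field_simps) (smt (verit) exp_gt_zero mult_pos_pos)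
    qed
    show "continuous_on ?K Upsilon" by (rule Ups_cont) simp
  qed
  obtain r0 where r0: "r0 \<in> ?K" "\<And>\<rho>. \<rho> \<in> ?K \<Longrightarrow> ?\<phi> r0 \<le> ?\<phi> \<rho>"
    using continuous_attains_inf[OF compact_Icc _ contK] False by fastforce
  have r0pos: "0 < r0" using r0(1) exp3_pos by (smt (verit) atLeastAtMost_iff)
  have "c * r0 \<le> 1" using r0(1) cpos by (auto simp: field_simps)
  then have gap0: "?\<phi> r0 > ln 2" using theta_strict[OF nonneg c cpos r0pos] by simp
  show ?thesis
  proof (intro exI[of _ "min (?\<phi> r0 - ln 2) (2 - ln 2)"] conjI allI impI)
    show "0 < min (?\<phi> r0 - ln 2) (2 - ln 2)" using gap0 ln2_lt2 by simp
    fix \<rho> :: real assume r: "0 < \<rho>" "c * \<rho> \<le> 1"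
    have g: "\<gamma> (c * \<rho>) \<ge> 0" using nonneg r cpos by simp
    show "?\<phi> \<rho> \<ge> ln 2 + min (?\<phi> r0 - ln 2) (2 - ln 2)"
    proof (cases "\<rho> \<le> exp (-3)")
      case True
      then have "Upsilon \<rho> \<ge> 2" using r by (intro Ups_big) auto
      then show ?thesis using g by simp
    next
      case False
      then have "\<rho> \<in> ?K" using r cpos by (auto simp: field_simps)
      from r0(2)[OF this] show ?thesis by simp
    qed
  qed
qed



lemma unif_bound:
  fixes p :: real and \<gamma> :: "real \<Rightarrow> real"
  assumes cont: "continuous_on {0..1} \<gamma>"
    and bound: "\<forall>a\<in>{0..1}. \<exists>g :: nat \<Rightarrow> real. g \<in> o(\<lambda>m. real m) \<and>
        (\<forall>v :: vertex. prob_space.prob (tree_space p)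
             {\<omega> \<in> space (tree_space p). path_weight \<omega> v > a * real (length v)}
           \<le> exp (- real (length v) * \<gamma> a + g (length v)))"
    and dl: "\<delta> > 0"
  shows "\<exists>M0. \<forall>a\<in>{0..1}. \<forall>v. length v \<ge> M0 \<longrightarrow>
     measure (tree_space p) {\<omega> \<in> space (tree_space p). path_weight \<omega> v > a * real (length v)}
       \<le> exp (- real (length v) * (\<gamma> a - \<delta>))"
proof -
  interpret T: prob_space "tree_space p"
    unfolding tree_space_def by (rule prob_space_PiM) (rule prob_space_vertex_dist)
  have uc: "uniformly_continuous_on {0..1} \<gamma>"
    by (rule compact_uniformly_continuous[OF cont compact_Icc])
  obtain d where d: "d > 0" "\<And>x x'. x \<in> {0..1} \<Longrightarrow> x' \<in> {0..1} \<Longrightarrow> dist x' x < d \<Longrightarrow> dist (\<gamma> x') (\<gamma> x) < \<delta>/2"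
    using uc[unfolded uniformly_continuous_on_def, rule_format, of "\<delta>/2"] dl by auto
  define N :: nat where "N = nat \<lfloor>1/d\<rfloor> + 1"
  have Npos: "N > 0" by (simp add: N_def)
  have Nd: "1 / real N < d"
  proof -
    have "1/d < real N" unfolding N_def by linarith
    then show ?thesis using d(1) Npos by (simp add: field_simps)
  qed
  have "\<forall>j\<in>{..N}. \<exists>g :: nat \<Rightarrow> real. g \<in> o(\<lambda>m. real m) \<and>
        (\<forall>v :: vertex. prob_space.prob (tree_space p)
             {\<omega> \<in> space (tree_space p). path_weight \<omega> v > (real j / real N) * real (length v)}
           \<le> exp (- real (length v) * \<gamma> (real j / real N) + g (length v)))"
  proof
    fix j assume "j \<in> {..N}"
    then have "real j / real N \<in> {0..1}" using Npos by (auto simp: field_simps)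
    then show "\<exists>g :: nat \<Rightarrow> real. g \<in> o(\<lambda>m. real m) \<and>
        (\<forall>v :: vertex. prob_space.prob (tree_space p)
             {\<omega> \<in> space (tree_space p). path_weight \<omega> v > (real j / real N) * real (length v)}
           \<le> exp (- real (length v) * \<gamma> (real j / real N) + g (length v)))"
      using bound by blast
  qed
  from bchoice[OF this] obtain G where G0: "\<forall>j\<in>{..N}. G j \<in> o(\<lambda>m. real m) \<and>
        (\<forall>v :: vertex. prob_space.prob (tree_space p)
             {\<omega> \<in> space (tree_space p). path_weight \<omega> v > (real j / real N) * real (length v)}
           \<le> exp (- real (length v) * \<gamma> (real j / real N) + G j (length v)))" ..
  have G: "\<And>j. j \<in> {..N} \<Longrightarrow> G j \<in> o(\<lambda>m. real m)"
    "\<And>j v. j \<in> {..N} \<Longrightarrow> prob_space.prob (tree_space p)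
             {\<omega> \<in> space (tree_space p). path_weight \<omega> v > (real j / real N) * real (length v)}
           \<le> exp (- real (length v) * \<gamma> (real j / real N) + G j (length v))"
    using G0 by blast+
  have ev: "eventually (\<lambda>m. \<forall>j\<in>{..N}. norm (G j m) \<le> \<delta>/2 * norm (real m)) at_top"
  proof (rule eventually_ball_finite)
    show "\<forall>j\<in>{..N}. \<forall>\<^sub>F m in at_top. norm (G j m) \<le> \<delta>/2 * norm (real m)"
    proof
      fix j assume "j \<in> {..N}"
      show "\<forall>\<^sub>F m in at_top. norm (G j m) \<le> \<delta>/2 * norm (real m)"
        by (rule landau_o.smallD[OF G(1)[OF \<open>j \<in> {..N}\<close>]]) (use dl in simp)
    qed
  qed simp
  then obtain M0 where M0: "\<And>m j. m \<ge> M0 \<Longrightarrow> j \<in> {..N} \<Longrightarrow> G j m \<le> \<delta>/2 * real m"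
  proof -
    from ev obtain M0 where "\<forall>n\<ge>M0. \<forall>j\<in>{..N}. norm (G j n) \<le> \<delta> / 2 * norm (real n)"
      unfolding eventually_at_top_linorder by blast
    then have "\<And>m j. m \<ge> M0 \<Longrightarrow> j \<in> {..N} \<Longrightarrow> G j m \<le> \<delta>/2 * real m"
      by (metis abs_le_D1 norm_of_nat real_norm_def)
    then show ?thesis using that by blast
  qed
  show ?thesis
  proof (intro exI[of _ M0] ballI allI impI)
    fix a :: real and v :: vertex assume a: "a \<in> {0..1}" and m: "length v \<ge> M0"
    define j where "j = nat \<lfloor>a * real N\<rfloor>"
    have jN: "j \<in> {..N}"
    proof -
      have "a * real N \<le> real N" using a by (simp add: mult_left_le_one_le)
      then show ?thesis unfolding j_def by (simp add: nat_le_iff floor_le_iff)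
    qed
    have aj0: "real j / real N \<le> a"
    proof -
      have "real j \<le> a * real N" unfolding j_def using a by (simp add: of_nat_nat)
      then show ?thesis using Npos by (simp add: field_simps)
    qed
    have aj1: "a - real j / real N < 1 / real N"
    proof -
      have "a * real N < real j + 1" unfolding j_def using a by (simp add: of_nat_nat)
      then have "(a * real N - real j) / real N < 1 / real N"
        using Npos by (intro divide_strict_right_mono) auto
      moreover have "a - real j / real N = (a * real N - real j) / real N"
        using Npos by (simp add: field_simps)
      ultimately show ?thesis by simp
    qed
    have ajI: "real j / real N \<in> {0..1}" using jN Npos by (auto simp: field_simps)
    have "dist (\<gamma> (real j / real N)) (\<gamma> a) < \<delta>/2"
      using d(2)[OF a ajI] aj0 aj1 Nd by (simp add: dist_real_def)
    then have gj: "\<gamma> (real j / real N) \<ge> \<gamma> a - \<delta>/2" unfolding dist_real_def by linarith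
    have sets: "{\<omega> \<in> space (tree_space p). path_weight \<omega> v > (real j / real N) * real (length v)} \<in> sets (tree_space p)"
      unfolding path_weight_eq using meas_T_Wv[of v p] by measurable
    have "measure (tree_space p) {\<omega> \<in> space (tree_space p). path_weight \<omega> v > a * real (length v)}
       \<le> measure (tree_space p) {\<omega> \<in> space (tree_space p). path_weight \<omega> v > (real j / real N) * real (length v)}"
    proof (rule T.finite_measure_mono[OF _ sets])
      show "{\<omega> \<in> space (tree_space p). path_weight \<omega> v > a * real (length v)} \<subseteq>
            {\<omega> \<in> space (tree_space p). path_weight \<omega> v > (real j / real N) * real (length v)}"
        using mult_right_mono[OF aj0, of "real (length v)"] by auto
    qed
    also have "\<dots> \<le> exp (- real (length v) * \<gamma> (real j / real N) + G j (length v))"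
      using G(2)[OF jN] by simp
    also have "\<dots> \<le> exp (- real (length v) * (\<gamma> a - \<delta>))"
    proof -
      have "G j (length v) \<le> \<delta>/2 * real (length v)" using M0[OF m jN] .
      moreover have "real (length v) * (\<gamma> a - \<delta>/2) \<le> real (length v) * \<gamma> (real j / real N)"
        using gj by (intro mult_left_mono) auto
      ultimately show ?thesis by (simp add: algebra_simps)
    qed
    finally show "measure (tree_space p) {\<omega> \<in> space (tree_space p). path_weight \<omega> v > a * real (length v)}
       \<le> exp (- real (length v) * (\<gamma> a - \<delta>))" .
  qed
qed



lemma prob_space_tree: "prob_space (tree_space p)"
  unfolding tree_space_def by (rule prob_space_PiM) (rule prob_space_vertex_dist)

lemma Wv_ge1_step: "Wv \<omega> v \<ge> 1 \<Longrightarrow> Wv \<omega> (b # v) \<ge> 1"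
  using Wv_nonneg[of \<omega> v] by (auto simp: max_def)

lemma Wv_repl: "Choice \<omega> [] = True \<Longrightarrow> Wv \<omega> (replicate (Suc k) True) \<ge> 1"
proof (induction k)
  case 0
  have "Yvar \<omega> [] \<le> 1" by (simp add: Yvar_def)
  with 0 show ?case by (simp add: max_def)
next
  case (Suc k)
  have eq: "replicate (Suc (Suc k)) True = True # replicate (Suc k) True" by simp
  show ?case unfolding eq by (rule Wv_ge1_step[OF Suc.IH[OF Suc.prems]])
qed

lemma prob_choice_root: "emeasure (tree_space p) {\<omega> \<in> space (tree_space p). Choice \<omega> [] = True} = ennreal (1/2)"
proof -
  interpret product_prob_space "\<lambda>_. vertex_dist p" UNIV by (rule pps_tree)
  let ?A = "UNIV \<times> ({True} \<times> (UNIV :: nat set)) :: (real \<times> bool \<times> nat) set"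
  have setsA: "?A \<in> sets (vertex_dist p)"
    unfolding vertex_dist_def by (intro pair_measureI) auto
  have eq: "{\<omega> \<in> space (tree_space p). Choice \<omega> [] = True} = {x \<in> space (PiM UNIV (\<lambda>_. vertex_dist p)). x [] \<in> ?A}"
    by (auto simp: Choice_def tree_space_def mem_Times_iff)
  interpret D: prob_space "density lborel (exponential_density 1 :: real \<Rightarrow> real)"
    by (rule prob_space_exponential_density) simp
  interpret BG: prob_space "measure_pmf (bernoulli_pmf (1/2)) \<Otimes>\<^sub>M measure_pmf (geometric_pmf p)"
    by (intro prob_space_pair prob_space_measure_pmf)
  have "emeasure (vertex_dist p) ?A =
     emeasure (density lborel (exponential_density 1)) UNIV *
     emeasure (measure_pmf (bernoulli_pmf (1/2)) \<Otimes>\<^sub>M measure_pmf (geometric_pmf p)) ({True} \<times> UNIV)"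
    unfolding vertex_dist_def
    by (rule BG.emeasure_pair_measure_Times) auto
  also have "emeasure (measure_pmf (bernoulli_pmf (1/2)) \<Otimes>\<^sub>M measure_pmf (geometric_pmf p)) ({True} \<times> UNIV)
     = emeasure (measure_pmf (bernoulli_pmf (1/2))) {True} * emeasure (measure_pmf (geometric_pmf p)) UNIV"
    by (rule measure_pmf.emeasure_pair_measure_Times) auto
  also have "emeasure (measure_pmf (bernoulli_pmf (1/2))) {True} = ennreal (1/2)"
    by (simp add: emeasure_pmf_single)
  finally have "emeasure (vertex_dist p) ?A = ennreal (1/2)"
    using D.emeasure_space_1 by simp
  moreover have "emeasure (PiM UNIV (\<lambda>_. vertex_dist p)) {x\<in>space (PiM UNIV (\<lambda>_. vertex_dist p)). x [] \<in> ?A} = emeasure (vertex_dist p) ?A"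
    by (rule emeasure_PiM_Collect_single) (auto simp: setsA)
  ultimately show ?thesis
    unfolding eq by (simp only: tree_space_def)
qed

lemma gamma0_small:
  fixes p :: real and \<gamma> :: "real \<Rightarrow> real"
  assumes bound: "\<forall>a\<in>{0..1}. \<exists>g :: nat \<Rightarrow> real. g \<in> o(\<lambda>m. real m) \<and>
        (\<forall>v :: vertex. prob_space.prob (tree_space p)
             {\<omega> \<in> space (tree_space p). path_weight \<omega> v > a * real (length v)}
           \<le> exp (- real (length v) * \<gamma> a + g (length v)))"
  shows "\<gamma> 0 < ln 2"
proof -
  interpret T: prob_space "tree_space p" by (rule prob_space_tree)
  obtain g where g: "g \<in> o(\<lambda>m. real m)"
    "\<And>v. T.prob {\<omega> \<in> space (tree_space p). path_weight \<omega> v > 0 * real (length v)}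
           \<le> exp (- real (length v) * \<gamma> 0 + g (length v))"
    using bound by force
  have l2: "ln (2::real) > 0" by simp
  have "\<forall>\<^sub>F m in at_top. norm (g m) \<le> ln 2 / 4 * norm (real m)"
    by (rule landau_o.smallD[OF g(1)]) (use l2 in simp)
  then obtain M0 where M0: "\<And>m. m \<ge> M0 \<Longrightarrow> norm (g m) \<le> ln 2 / 4 * norm (real m)"
    unfolding eventually_at_top_linorder by blast
  define m where "m = max M0 4"
  have m4: "m \<ge> 4" "m \<ge> M0" by (auto simp: m_def)
  have gm: "g m \<le> ln 2 / 4 * real m" using M0[OF m4(2)] by simp
  obtain k where mk: "m = Suc k" using m4 by (cases m) auto
  define v where "v = replicate m True"
  have sets: "{\<omega> \<in> space (tree_space p). path_weight \<omega> v > 0 * real (length v)} \<in> sets (tree_space p)"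
    unfolding path_weight_eq using meas_T_Wv[of v p] by measurable
  have "ennreal (T.prob {\<omega> \<in> space (tree_space p). Choice \<omega> [] = True}) = ennreal (1/2)"
    using prob_choice_root[of p] by (simp only: T.emeasure_eq_measure)
  then have "T.prob {\<omega> \<in> space (tree_space p). Choice \<omega> [] = True} = 1/2"
    by (subst (asm) ennreal_inj) auto
  moreover have "T.prob {\<omega> \<in> space (tree_space p). Choice \<omega> [] = True}
      \<le> T.prob {\<omega> \<in> space (tree_space p). path_weight \<omega> v > 0 * real (length v)}"
  proof (rule T.finite_measure_mono[OF _ sets], intro subsetI)
    fix \<omega> assume w: "\<omega> \<in> {\<omega> \<in> space (tree_space p). Choice \<omega> [] = True}"
    then have "Wv \<omega> (replicate (Suc k) True) \<ge> 1" using Wv_repl by blast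
    then show "\<omega> \<in> {\<omega> \<in> space (tree_space p). path_weight \<omega> v > 0 * real (length v)}"
      using w unfolding path_weight_eq v_def mk by simp
  qed
  ultimately have "1/2 \<le> exp (- real m * \<gamma> 0 + g m)"
    using g(2)[of v] by (simp add: v_def)
  then have "ln (1/2) \<le> - real m * \<gamma> 0 + g m"
    by (metis exp_gt_zero ln_exp ln_le_cancel_iff zero_less_divide_1_iff zero_less_numeral)
  then have "real m * \<gamma> 0 \<le> ln 2 + ln 2 / 4 * real m"
    using gm by (simp add: ln_div)
  then have "\<gamma> 0 \<le> ln 2 / real m + ln 2 / 4"
    using m4 by (simp add: field_simps)
  also have "ln 2 / real m \<le> ln 2 / 4"
    using m4 l2 by (intro divide_left_mono) auto
  finally show ?thesis using l2 by linarith
qed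



lemma chernoff_Ups:
  assumes m: "length v > 0" and t: "t > 0"
  shows "emeasure (tree_space p) {\<omega>\<in>space (tree_space p). birth \<omega> v \<le> t}
     \<le> ennreal (exp (- real (length v) * Upsilon (t / real (length v))))"
proof -
  let ?m = "real (length v)"
  define \<rho> where "\<rho> = t / ?m"
  have rpos: "\<rho> > 0" using m t by (simp add: \<rho>_def)
  show ?thesis
  proof (cases "\<rho> \<le> 1")
    case False
    then have "Upsilon \<rho> = 0" by (simp add: Upsilon_def)
    moreover have "emeasure (tree_space p) {\<omega>\<in>space (tree_space p). birth \<omega> v \<le> t} \<le> ennreal (exp (0 * t) * (1 / (1 + 0)) ^ length v)"
      by (rule chernoff_birth) simp
    ultimately show ?thesis by (simp add: \<rho>_def)
  next
    case True
    define lam where "lam = 1 / \<rho> - 1"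
    have lam0: "0 \<le> lam" using True rpos by (simp add: lam_def field_simps)
    have "emeasure (tree_space p) {\<omega>\<in>space (tree_space p). birth \<omega> v \<le> t} \<le> ennreal (exp (lam * t) * (1 / (1 + lam)) ^ length v)"
      by (rule chernoff_birth[OF lam0])
    also have "exp (lam * t) * (1 / (1 + lam)) ^ length v = exp (- ?m * Upsilon \<rho>)"
    proof -
      have e1: "1 / (1 + lam) = \<rho>" using rpos by (simp add: lam_def)
      have e2: "lam * t = ?m - t" using rpos m t by (simp add: lam_def \<rho>_def field_simps)
      have e3: "\<rho> ^ length v = exp (?m * ln \<rho>)"
        using rpos by (simp add: exp_of_nat_mult)
      have e4: "?m * \<rho> = t" using m by (simp add: \<rho>_def)
      show ?thesis unfolding e1 e2 e3 using True e4
        by (simp add: Upsilon_def exp_add[symmetric] algebra_simps)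
    qed
    finally show ?thesis by (simp add: \<rho>_def)
  qed
qed



lemma vertex_bound:
  fixes p c t \<delta> :: real and \<gamma> :: "real \<Rightarrow> real" and M0 :: nat
  assumes gap: "\<forall>\<rho>. 0 < \<rho> \<longrightarrow> c * \<rho> \<le> 1 \<longrightarrow> \<gamma> (c * \<rho>) + Upsilon \<rho> \<ge> ln 2 + \<delta>"
    and M0: "\<forall>a\<in>{0..1}. \<forall>v. length v \<ge> M0 \<longrightarrow>
     measure (tree_space p) {\<omega> \<in> space (tree_space p). path_weight \<omega> v > a * real (length v)}
       \<le> exp (- real (length v) * (\<gamma> a - \<delta>/4))"
    and c: "c > 0" and t: "t > 0" and m: "length v \<ge> M0" "c * t < real (length v)"
  shows "emeasure (tree_space p) {\<omega>\<in>space (tree_space p). birth \<omega> v \<le> t \<and> Wv \<omega> v > c * t}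
     \<le> ennreal (exp (- real (length v) * (ln 2 + 3 * \<delta> / 4)))"
proof -
  interpret T: prob_space "tree_space p" by (rule prob_space_tree)
  let ?m = "real (length v)"
  have mpos: "?m > 0" using m(2) c t by (smt (verit) mult_pos_pos)
  define \<rho> where "\<rho> = t / ?m"
  have rpos: "\<rho> > 0" using mpos t by (simp add: \<rho>_def)
  have cr: "c * \<rho> \<le> 1" using m(2) mpos by (simp add: \<rho>_def field_simps)
  have cr0: "c * \<rho> \<in> {0..1}" using cr rpos c by simp
  have eqW: "{\<omega>\<in>space (tree_space p). Wv \<omega> v > c * t} =
      {\<omega> \<in> space (tree_space p). path_weight \<omega> v > (c * \<rho>) * real (length v)}"
    using mpos by (simp add: path_weight_eq \<rho>_def)
  have W: "emeasure (tree_space p) {\<omega>\<in>space (tree_space p). Wv \<omega> v > c * t}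
      \<le> ennreal (exp (- ?m * (\<gamma> (c * \<rho>) - \<delta>/4)))"
    unfolding eqW T.emeasure_eq_measure using M0 cr0 m(1) by (simp add: ennreal_leI)
  have B: "emeasure (tree_space p) {\<omega>\<in>space (tree_space p). birth \<omega> v \<le> t}
      \<le> ennreal (exp (- ?m * Upsilon \<rho>))"
    unfolding \<rho>_def by (rule chernoff_Ups) (use mpos t in auto)
  have "emeasure (tree_space p) {\<omega>\<in>space (tree_space p). birth \<omega> v \<le> t \<and> Wv \<omega> v > c * t}
     = emeasure (tree_space p) {\<omega>\<in>space (tree_space p). birth \<omega> v \<le> t} *
       emeasure (tree_space p) {\<omega>\<in>space (tree_space p). Wv \<omega> v > c * t}"
    by (rule factor)
  also have "\<dots> \<le> ennreal (exp (- ?m * Upsilon \<rho>)) * ennreal (exp (- ?m * (\<gamma> (c * \<rho>) - \<delta>/4)))"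
    by (intro mult_mono B W) auto
  also have "\<dots> = ennreal (exp (- ?m * (Upsilon \<rho> + \<gamma> (c * \<rho>) - \<delta>/4)))"
    by (simp add: ennreal_mult'[symmetric] exp_add[symmetric] algebra_simps)
  also have "\<dots> \<le> ennreal (exp (- ?m * (ln 2 + 3 * \<delta> / 4)))"
  proof (rule ennreal_leI, rule exp_mono)
    have "Upsilon \<rho> + \<gamma> (c * \<rho>) - \<delta>/4 \<ge> ln 2 + 3 * \<delta> / 4"
      using gap rpos cr by force
    then show "- ?m * (Upsilon \<rho> + \<gamma> (c * \<rho>) - \<delta> / 4) \<le> - ?m * (ln 2 + 3 * \<delta> / 4)"
      using mpos by (intro mult_left_mono_neg) auto
  qed
  finally show ?thesis .
qed



lemma exp_decay_tendsto: "k > 0 \<Longrightarrow> ((\<lambda>t::real. exp (- (k * t)) / d) \<longlongrightarrow> 0) at_top"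
proof -
  assume k: "k > 0"
  have "filterlim (\<lambda>t::real. - (k * t)) at_bot at_top"
  proof -
    have "filterlim (\<lambda>t::real. k * t) at_top at_top"
      by (rule filterlim_tendsto_pos_mult_at_top[OF tendsto_const k filterlim_ident])
    then show ?thesis by (simp add: filterlim_uminus_at_bot)
  qed
  then have "((\<lambda>t::real. exp (- (k * t))) \<longlongrightarrow> 0) at_top"
    by (rule filterlim_compose[OF exp_at_bot])
  then show ?thesis using tendsto_divide_zero by blast
qed

theorem lemma18:
  fixes p :: real and \<gamma> :: "real \<Rightarrow> real"
  assumes p: "0 < p" "p < 1"
    and cont: "continuous_on {0..1} \<gamma>"
    and nonneg: "\<forall>a\<in>{0..1}. \<gamma> a \<ge> 0"
    and bound: "\<forall>a\<in>{0..1}. \<exists>g :: nat \<Rightarrow> real. g \<in> o(\<lambda>m. real m) \<and>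
        (\<forall>v :: vertex. prob_space.prob (tree_space p)
             {\<omega> \<in> space (tree_space p). path_weight \<omega> v > a * real (length v)}
           \<le> exp (- real (length v) * \<gamma> a + g (length v)))"
  shows "\<forall>\<epsilon>>0. ((\<lambda>t. prob_space.prob (tree_space p)
            {\<omega> \<in> space (tree_space p). wh \<omega> t > ereal (theta \<gamma> * (1 + \<epsilon>) * t)})
          \<longlongrightarrow> 0) at_top"
proof (intro allI impI)
  fix \<epsilon> :: real assume eps: "\<epsilon> > 0"
  interpret T: prob_space "tree_space p" by (rule prob_space_tree)
  have g0: "\<gamma> 0 < ln 2" by (rule gamma0_small[OF bound])
  have thp: "theta \<gamma> > 0" by (rule theta_pos[OF cont nonneg g0])
  define c where "c = theta \<gamma> * (1 + \<epsilon>)"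
  have cth: "c > theta \<gamma>" using thp eps by (simp add: c_def algebra_simps)
  have cpos: "c > 0" using thp eps by (simp add: c_def)
  obtain \<delta> where dl: "\<delta> > 0" and gap: "\<forall>\<rho>. 0 < \<rho> \<longrightarrow> c * \<rho> \<le> 1 \<longrightarrow> \<gamma> (c * \<rho>) + Upsilon \<rho> \<ge> ln 2 + \<delta>"
    using theta_gap[OF cont nonneg cth cpos] by blast
  obtain M0 where M0: "\<forall>a\<in>{0..1}. \<forall>v. length v \<ge> M0 \<longrightarrow>
     measure (tree_space p) {\<omega> \<in> space (tree_space p). path_weight \<omega> v > a * real (length v)}
       \<le> exp (- real (length v) * (\<gamma> a - \<delta>/4))"
    using unif_bound[OF cont bound, of "\<delta>/4"] dl by auto
  define \<beta> where "\<beta> = 3 * \<delta> / 4"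
  have bpos: "\<beta> > 0" using dl by (simp add: \<beta>_def)
  define r where "r = exp (- \<beta> / 2)"
  have r01: "0 < r" "r < 1" using bpos by (auto simp: r_def)
  define K where "K t = exp (- (\<beta> * c / 2 * t))" for t
  have key: "measure (tree_space p) {\<omega> \<in> space (tree_space p). wh \<omega> t > ereal (c * t)} \<le> K t / (1 - r)"
    if t: "t > 0" "c * t \<ge> M0" for t
  proof -
    define A where "A v = {\<omega>\<in>space (tree_space p). birth \<omega> v \<le> t \<and> Wv \<omega> v > c * t}" for v
    define L where "L m = {xs :: vertex. set xs \<subseteq> UNIV \<and> length xs = m}" for m
    define U where "U m = (\<Union>v\<in>L m. A v)" for m
    have finL: "finite (L m)" for m unfolding L_def by (rule finite_lists_length_eq) simp
    have cardL: "card (L m) = 2 ^ m" for m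
      using card_lists_length_eq[of "UNIV::bool set" m] unfolding L_def by simp
    have setsA: "A v \<in> sets (tree_space p)" for v
      unfolding A_def using meas_T_birth[of v p] meas_T_Wv[of v p] by measurable
    have setsU: "U m \<in> sets (tree_space p)" for m
      unfolding U_def using finL setsA by auto
    define f where "f m = (if c * t < real m then exp (- \<beta> * real m) else 0)" for m :: nat
    have Um: "emeasure (tree_space p) (U m) \<le> ennreal (f m)" for m
    proof (cases "c * t < real m")
      case False
      have "A v = {}" if "v \<in> L m" for v
      proof -
        have lv: "length v = m" using that by (simp add: L_def)
        have "\<not> Wv \<omega> v > c * t" for \<omega> using Wv_le_length[of \<omega> v] False lv by linarith
        then show ?thesis by (auto simp: A_def)
      qed
      then have "U m = {}" by (simp add: U_def)
      then show ?thesis by simp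
    next
      case True
      have "emeasure (tree_space p) (U m) \<le> (\<Sum>v\<in>L m. emeasure (tree_space p) (A v))"
        unfolding U_def by (rule emeasure_subadditive_finite[OF finL]) (use setsA in auto)
      also have "\<dots> \<le> (\<Sum>v\<in>L m. ennreal (exp (- real m * (ln 2 + \<beta>))))"
      proof (rule sum_mono)
        fix v assume v: "v \<in> L m"
        then have lv: "length v = m" by (simp add: L_def)
        have "M0 \<le> length v" using True t(2) lv by linarith
        from vertex_bound[OF gap M0 cpos t(1) this] True lv
        show "emeasure (tree_space p) (A v) \<le> ennreal (exp (- real m * (ln 2 + \<beta>)))"
          by (simp add: A_def \<beta>_def)
      qed
      also have "\<dots> = ennreal (2 ^ m * exp (- real m * (ln 2 + \<beta>)))"
        by (simp add: cardL ennreal_mult' ennreal_power[symmetric])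
      also have "2 ^ m * exp (- real m * (ln 2 + \<beta>)) = f m"
      proof -
        have "(2::real) ^ m = exp (real m * ln 2)" by (simp add: exp_of_nat_mult)
        then show ?thesis using True
          by (simp add: f_def exp_add[symmetric] algebra_simps)
      qed
      finally show ?thesis .
    qed
    have fK: "f m \<le> K t * r ^ m" for m
    proof (cases "c * t < real m")
      case True
      have "exp (- \<beta> * real m) = exp (- \<beta> * real m / 2) * exp (- \<beta> * real m / 2)"
        by (simp add: exp_add[symmetric])
      also have "\<dots> \<le> K t * r ^ m"
      proof (rule mult_mono)
        show "exp (- \<beta> * real m / 2) \<le> K t"
          unfolding K_def using True bpos by (simp add: mult_left_mono)
        show "exp (- \<beta> * real m / 2) \<le> r ^ m"
          unfolding r_def by (simp add: exp_of_nat_mult[symmetric] algebra_simps)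
      qed (auto simp: K_def)
      finally show ?thesis using True by (simp add: f_def)
    qed (simp add: f_def K_def r_def)
    have E: "{\<omega> \<in> space (tree_space p). wh \<omega> t > ereal (c * t)} \<subseteq> (\<Union>m. U m)"
    proof
      fix \<omega> assume w: "\<omega> \<in> {\<omega> \<in> space (tree_space p). wh \<omega> t > ereal (c * t)}"
      then obtain v where v: "birth \<omega> v \<le> t" "ereal (c * t) < ereal (Wv \<omega> v)"
        by (auto simp: wh_def less_SUP_iff)
      then have "\<omega> \<in> A v" using w by (simp add: A_def)
      moreover have "v \<in> L (length v)" by (simp add: L_def)
      ultimately show "\<omega> \<in> (\<Union>m. U m)" unfolding U_def by blast
    qed
    have "emeasure (tree_space p) {\<omega> \<in> space (tree_space p). wh \<omega> t > ereal (c * t)}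
        \<le> emeasure (tree_space p) (\<Union>m. U m)"
      by (rule emeasure_mono[OF E]) (use setsU in auto)
    also have "\<dots> \<le> (\<Sum>m. emeasure (tree_space p) (U m))"
      by (rule emeasure_subadditive_countably) (use setsU in auto)
    also have "\<dots> \<le> (\<Sum>m. ennreal (K t * r ^ m))"
      by (intro suminf_le summableI order.trans[OF Um] ennreal_leI fK)
    also have "\<dots> = ennreal (\<Sum>m. K t * r ^ m)"
      by (rule suminf_ennreal2) (use r01 in \<open>auto simp: K_def intro!: summable_mult summable_geometric\<close>)
    also have "(\<Sum>m. K t * r ^ m) = K t / (1 - r)"
      using r01 by (simp add: suminf_mult suminf_geometric summable_geometric divide_inverse)
    finally show ?thesis
      using r01 by (simp add: T.emeasure_eq_measure K_def)
  qed
  show "((\<lambda>t. prob_space.prob (tree_space p)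
            {\<omega> \<in> space (tree_space p). wh \<omega> t > ereal (theta \<gamma> * (1 + \<epsilon>) * t)}) \<longlongrightarrow> 0) at_top"
    unfolding c_def[symmetric]
  proof (rule tendsto_sandwich[of "\<lambda>_. 0" _ _ "\<lambda>t. K t / (1 - r)"])
    show "\<forall>\<^sub>F t in at_top. 0 \<le> measure (tree_space p) {\<omega> \<in> space (tree_space p). wh \<omega> t > ereal (c * t)}"
      by simp
    have "\<forall>\<^sub>F t in at_top. t > max 0 (real M0 / c)" by (rule eventually_gt_at_top)
    then show "\<forall>\<^sub>F t in at_top. measure (tree_space p) {\<omega> \<in> space (tree_space p). wh \<omega> t > ereal (c * t)} \<le> K t / (1 - r)"
    proof eventually_elim
      case (elim t)
      have t0: "t > 0" using elim by simp
      have "real M0 / c < t" using elim by simp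
      then have "c * t \<ge> M0" using cpos by (simp add: field_simps)
      with t0 show ?case by (rule key)
    qed
    show "((\<lambda>t. K t / (1 - r)) \<longlongrightarrow> 0) at_top"
      unfolding K_def by (rule exp_decay_tendsto) (use bpos cpos in simp)
  qed simp
qed

end
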